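(* Let $k$ be a field of characteristic not $2$, $\lambda\in k^\times$, $(V,\circ)$ a commutative associative algebra over $k$ with unit $e$, $\Theta:V\times V\to k$ an antisymmetric bilinear form, and $A_\Theta$ the algebra generated by $V$ with relations $vw-wv=\lambda\Theta(v,w)$ for $v,w\in V$ (so $A_\Theta=k[x^1,\dots,x^n]$ when $\Theta=0$). If $B:V\times V\to A_\Theta$ is bilinear and satisfies $B(v\circ w,z)+B(v,w\circ z)=\lambda^{-1}[B(v,z),w]$ for all $v,w,z\in V$, then $B=0$. Consequently the associated calculus $[\mathrm dv,w]=\lambda\,\mathrm d(v\circ w)$ admits no nonzero bimodule inner product of the form $(\mathrm dv,\mathrm dw)=B(v,w)$.
   Context: Here $[a,w]=aw-wa$ in $A_\Theta$. A bimodule inner product on $\Omega^1$ is a bimodule map $(\ ,\ ):\Omega^1\otimes_A\Omega^1\to A_\Theta$; for inner products of the form $(\mathrm dv,\mathrm dw)=B(v,w)$ the bimodule property is equivalent to the displayed identity. $A_\Theta$ is filtered by polynomial degree in elements of $V$. *)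

theory Defs
  imports Complex_Main
begin

text \<open>The free associative k-algebra on the set V: elements are finitely supported
  functions from words (lists of elements of V) to k.  A_Theta is its quotient by the
  two-sided ideal generated by linearity of the letters and the relations
  v w - w v = lambda Theta(v,w).  Instead of forming the quotient type we work with
  representatives modulo the ideal.\<close>

definition fa_fin :: "('v list \<Rightarrow> 'k::comm_ring_1) \<Rightarrow> bool" where
  "fa_fin f \<longleftrightarrow> finite {u. f u \<noteq> 0}"

definition fa_mult :: "('v list \<Rightarrow> 'k::comm_ring_1) \<Rightarrow> ('v list \<Rightarrow> 'k) \<Rightarrow> ('v list \<Rightarrow> 'k)" where
  "fa_mult f g = (\<lambda>w. \<Sum>i\<le>length w. f (take i w) * g (drop i w))"

definition fa_add :: "('v list \<Rightarrow> 'k::comm_ring_1) \<Rightarrow> ('v list \<Rightarrow> 'k) \<Rightarrow> ('v list \<Rightarrow> 'k)" where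
  "fa_add f g = (\<lambda>u. f u + g u)"

definition fa_diff :: "('v list \<Rightarrow> 'k::comm_ring_1) \<Rightarrow> ('v list \<Rightarrow> 'k) \<Rightarrow> ('v list \<Rightarrow> 'k)" where
  "fa_diff f g = (\<lambda>u. f u - g u)"

definition fa_smul :: "'k::comm_ring_1 \<Rightarrow> ('v list \<Rightarrow> 'k) \<Rightarrow> ('v list \<Rightarrow> 'k)" where
  "fa_smul c f = (\<lambda>u. c * f u)"

definition fa_one :: "'v list \<Rightarrow> 'k::comm_ring_1" where
  "fa_one = (\<lambda>u. if u = [] then 1 else 0)"

definition fa_zero :: "'v list \<Rightarrow> 'k::comm_ring_1" where
  "fa_zero = (\<lambda>u. 0)"

definition fa_letter :: "'v \<Rightarrow> 'v list \<Rightarrow> 'k::comm_ring_1" where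
  "fa_letter v = (\<lambda>u. if u = [v] then 1 else 0)"

definition fa_comm :: "('v list \<Rightarrow> 'k::comm_ring_1) \<Rightarrow> ('v list \<Rightarrow> 'k) \<Rightarrow> ('v list \<Rightarrow> 'k)" where
  "fa_comm f g = fa_diff (fa_mult f g) (fa_mult g f)"

inductive_set theta_ideal ::
  "('k::field \<Rightarrow> 'v::ab_group_add \<Rightarrow> 'v) \<Rightarrow> ('v \<Rightarrow> 'v \<Rightarrow> 'k) \<Rightarrow> 'k \<Rightarrow> ('v list \<Rightarrow> 'k) set"
  for sc :: "'k::field \<Rightarrow> 'v::ab_group_add \<Rightarrow> 'v" and \<Theta> :: "'v \<Rightarrow> 'v \<Rightarrow> 'k" and lam :: 'k
where
  lin_add: "fa_diff (fa_letter (v + w)) (fa_add (fa_letter v) (fa_letter w)) \<in> theta_ideal sc \<Theta> lam"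
| lin_smul: "fa_diff (fa_letter (sc c v)) (fa_smul c (fa_letter v)) \<in> theta_ideal sc \<Theta> lam"
| rel: "fa_diff (fa_comm (fa_letter v) (fa_letter w)) (fa_smul (lam * \<Theta> v w) fa_one)
          \<in> theta_ideal sc \<Theta> lam"
| zero: "fa_zero \<in> theta_ideal sc \<Theta> lam"
| add: "f \<in> theta_ideal sc \<Theta> lam \<Longrightarrow> g \<in> theta_ideal sc \<Theta> lam \<Longrightarrow> fa_add f g \<in> theta_ideal sc \<Theta> lam"
| smul: "f \<in> theta_ideal sc \<Theta> lam \<Longrightarrow> fa_smul c f \<in> theta_ideal sc \<Theta> lam"
| lmult: "f \<in> theta_ideal sc \<Theta> lam \<Longrightarrow> fa_fin g \<Longrightarrow> fa_mult g f \<in> theta_ideal sc \<Theta> lam"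
| rmult: "f \<in> theta_ideal sc \<Theta> lam \<Longrightarrow> fa_fin g \<Longrightarrow> fa_mult f g \<in> theta_ideal sc \<Theta> lam"

definition theta_eq ::
  "('k::field \<Rightarrow> 'v::ab_group_add \<Rightarrow> 'v) \<Rightarrow> ('v \<Rightarrow> 'v \<Rightarrow> 'k) \<Rightarrow> 'k \<Rightarrow> ('v list \<Rightarrow> 'k) \<Rightarrow> ('v list \<Rightarrow> 'k) \<Rightarrow> bool"
  where "theta_eq sc \<Theta> lam f g \<longleftrightarrow> fa_diff f g \<in> theta_ideal sc \<Theta> lam"

end

theory Submission
  imports Defs
begin

lemma sum_single:
  fixes k n :: nat
  assumes "k \<le> n" "\<And>i. i \<le> n \<Longrightarrow> i \<noteq> k \<Longrightarrow> h i = 0"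
  shows "(\<Sum>i\<le>n. h i) = (h k :: 'a::comm_monoid_add)"
proof -
  have "(\<Sum>i\<le>n. h i) = h k + (\<Sum>i\<in>{..n} - {k}. h i)"
    using assms(1) sum.remove[of "{..n}" k h] by auto
  also have "(\<Sum>i\<in>{..n} - {k}. h i) = 0" using assms(2) by (intro sum.neutral) auto
  finally show ?thesis by simp
qed

lemma mult_one_left: "fa_mult fa_one g = g"
proof
  fix w show "fa_mult fa_one g w = g w"
    unfolding fa_mult_def fa_one_def
    by (subst sum_single[of 0]) auto
qed

lemma mult_one_right: "fa_mult g fa_one = g"
proof
  fix w show "fa_mult g fa_one w = g w"
    unfolding fa_mult_def fa_one_def
    by (subst sum_single[of "length w"]) auto
qed

lemma mult_letter_left:
  "fa_mult (fa_letter a) g = (\<lambda>w. case w of [] \<Rightarrow> 0 | y#w' \<Rightarrow> if y = a then g w' else 0)"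
proof
  fix w show "fa_mult (fa_letter a) g w = (case w of [] \<Rightarrow> 0 | y#w' \<Rightarrow> if y = a then g w' else 0)"
  proof (cases w)
    case Nil then show ?thesis by (simp add: fa_mult_def fa_letter_def)
  next
    case (Cons y w')
    have "fa_mult (fa_letter a) g w = fa_letter a (take 1 w) * g (drop 1 w)"
      unfolding fa_mult_def
    proof (rule sum_single)
      show "1 \<le> length w" using Cons by simp
      fix i assume "i \<le> length w" "i \<noteq> 1"
      then show "fa_letter a (take i w) * g (drop i w) = 0"
        using Cons by (cases i; cases w'; cases "i - 1"; auto simp: fa_letter_def)
    qed
    then show ?thesis using Cons by (simp add: fa_letter_def)
  qed
qed

lemma assoc_letter:
  "fa_mult (fa_mult (fa_letter a) g) h = fa_mult (fa_letter a) (fa_mult g h)"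
  unfolding mult_letter_left
proof
  fix w show "fa_mult (\<lambda>w. case w of [] \<Rightarrow> 0 | y # w' \<Rightarrow> if y = a then g w' else 0) h w =
         (case w of [] \<Rightarrow> 0 | y # w' \<Rightarrow> if y = a then fa_mult g h w' else 0)"
    by (cases w) (auto simp del: sum.atMost_Suc simp add: fa_mult_def sum.atMost_Suc_shift)
qed

lemma mult_add_left: "fa_mult (fa_add a b) c = fa_add (fa_mult a c) (fa_mult b c)"
  unfolding fa_mult_def fa_add_def by (simp add: distrib_right sum.distrib)
lemma mult_add_right: "fa_mult c (fa_add a b) = fa_add (fa_mult c a) (fa_mult c b)"
  unfolding fa_mult_def fa_add_def by (simp add: distrib_left sum.distrib)
lemma mult_diff_left: "fa_mult (fa_diff a b) c = fa_diff (fa_mult a c) (fa_mult b c)"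
  unfolding fa_mult_def fa_diff_def by (simp add: left_diff_distrib sum_subtractf)
lemma mult_diff_right: "fa_mult c (fa_diff a b) = fa_diff (fa_mult c a) (fa_mult c b)"
  unfolding fa_mult_def fa_diff_def by (simp add: right_diff_distrib sum_subtractf)
lemma mult_smul_left: "fa_mult (fa_smul r a) c = fa_smul r (fa_mult a c)"
  unfolding fa_mult_def fa_smul_def by (simp add: sum_distrib_left mult.assoc)
lemma mult_smul_right: "fa_mult c (fa_smul r a) = fa_smul r (fa_mult c a)"
  unfolding fa_mult_def fa_smul_def by (simp add: sum_distrib_left ac_simps)
lemma mult_zero_left: "fa_mult fa_zero c = fa_zero"
  unfolding fa_mult_def fa_zero_def by simp
lemma mult_zero_right: "fa_mult c fa_zero = fa_zero"
  unfolding fa_mult_def fa_zero_def by simp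

lemma fin_letter: "fa_fin (fa_letter v)"
  unfolding fa_fin_def fa_letter_def by (rule finite_subset[of _ "{[v]}"]) auto


definition Dop :: "'v \<Rightarrow> ('v list \<Rightarrow> 'k::comm_ring_1) \<Rightarrow> ('v list \<Rightarrow> 'k)" where
  "Dop e f = fa_comm f (fa_letter e)"

lemma D_add: "Dop e (fa_add a b) = fa_add (Dop e a) (Dop e b)"
  unfolding Dop_def fa_comm_def mult_add_left mult_add_right
  by (auto simp: fa_add_def fa_diff_def)
lemma D_diff: "Dop e (fa_diff a b) = fa_diff (Dop e a) (Dop e b)"
  unfolding Dop_def fa_comm_def mult_diff_left mult_diff_right
  by (auto simp: fa_diff_def)
lemma D_smul: "Dop e (fa_smul r a) = fa_smul r (Dop e a)"
  unfolding Dop_def fa_comm_def mult_smul_left mult_smul_right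
  by (auto simp: fa_smul_def fa_diff_def algebra_simps)
lemma D_zero: "Dop e fa_zero = fa_zero"
  unfolding Dop_def fa_comm_def mult_zero_left mult_zero_right
  by (auto simp: fa_zero_def fa_diff_def)

lemma Dn_add: "(Dop e ^^ n) (fa_add a b) = fa_add ((Dop e ^^ n) a) ((Dop e ^^ n) b)"
  by (induction n) (auto simp: D_add)
lemma Dn_diff: "(Dop e ^^ n) (fa_diff a b) = fa_diff ((Dop e ^^ n) a) ((Dop e ^^ n) b)"
  by (induction n) (auto simp: D_diff)
lemma Dn_smul: "(Dop e ^^ n) (fa_smul r a) = fa_smul r ((Dop e ^^ n) a)"
  by (induction n) (auto simp: D_smul)

context
  fixes sc :: "'k::field \<Rightarrow> 'v::ab_group_add \<Rightarrow> 'v" and \<Theta> :: "'v \<Rightarrow> 'v \<Rightarrow> 'k" and lam :: 'k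
begin

abbreviation "I \<equiv> theta_ideal sc \<Theta> lam"

lemma I_diff: "f \<in> I \<Longrightarrow> g \<in> I \<Longrightarrow> fa_diff f g \<in> I"
proof -
  assume "f \<in> I" "g \<in> I"
  then have "fa_add f (fa_smul (-1) g) \<in> I" by (intro theta_ideal.add theta_ideal.smul)
  moreover have "fa_add f (fa_smul (-1) g) = fa_diff f g"
    by (auto simp: fa_add_def fa_smul_def fa_diff_def)
  ultimately show ?thesis by simp
qed

lemma D_I: "f \<in> I \<Longrightarrow> Dop e f \<in> I"
  unfolding Dop_def fa_comm_def
  by (intro I_diff theta_ideal.rmult theta_ideal.lmult fin_letter)

lemma Dn_I: "f \<in> I \<Longrightarrow> (Dop e ^^ n) f \<in> I"
  by (induction n) (auto intro: D_I)

definition word :: "'v list \<Rightarrow> 'v list \<Rightarrow> 'k" where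
  "word u = (\<lambda>w. if w = u then 1 else 0)"

lemma word_Cons: "word (x#u) = fa_mult (fa_letter x) (word u)"
  unfolding mult_letter_left word_def by (auto split: list.split)

lemma fin_word: "fa_fin (word u)"
  unfolding fa_fin_def word_def by (rule finite_subset[of _ "{u}"]) auto

lemma D_mult_letter:
  "Dop e (fa_mult (fa_letter x) W) =
     fa_add (fa_mult (fa_letter x) (Dop e W)) (fa_mult (Dop e (fa_letter x)) W)"
  unfolding Dop_def fa_comm_def mult_diff_left mult_diff_right assoc_letter
  by (auto simp: fa_add_def fa_diff_def)

lemma word_step:
  fixes e :: 'v
  shows "\<exists>g. fa_fin g \<and> (\<forall>w. g w \<noteq> 0 \<longrightarrow> length w < length u) \<and> fa_diff (Dop e (word u)) g \<in> I"
proof (induction u)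
  case Nil
  have "word [] = (fa_one :: 'v list \<Rightarrow> 'k)" by (auto simp: word_def fa_one_def)
  then have "Dop e (word []) = (fa_zero :: 'v list \<Rightarrow> 'k)"
    by (auto simp: Dop_def fa_comm_def mult_one_left mult_one_right fa_diff_def fa_zero_def)
  moreover have "fa_diff fa_zero fa_zero = (fa_zero :: 'v list \<Rightarrow> 'k)" by (auto simp: fa_diff_def fa_zero_def)
  moreover have "fa_fin (fa_zero :: 'v list \<Rightarrow> 'k)" by (simp add: fa_fin_def fa_zero_def)
  ultimately show ?case using theta_ideal.zero[of sc \<Theta> lam]
    by (intro exI[of _ fa_zero]) (simp add: fa_zero_def)
next
  case (Cons x u)
  then obtain g where g: "fa_fin g" "\<forall>w. g w \<noteq> 0 \<longrightarrow> length w < length u"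
    "fa_diff (Dop e (word u)) g \<in> I" by blast
  define c where "c = lam * \<Theta> x e"
  define X where "X = (fa_letter x :: 'v list \<Rightarrow> 'k)"
  define W where "W = word u"
  define g' where "g' = fa_add (fa_mult X g) (fa_smul c W)"
  have rel: "fa_diff (Dop e X) (fa_smul c fa_one) \<in> I"
    unfolding X_def Dop_def c_def by (rule theta_ideal.rel)
  have eq: "fa_diff (Dop e (word (x#u))) g' =
     fa_add (fa_mult X (fa_diff (Dop e W) g)) (fa_mult (fa_diff (Dop e X) (fa_smul c fa_one)) W)"
    unfolding word_Cons D_mult_letter g'_def mult_diff_left mult_diff_right mult_smul_left
      mult_one_left X_def W_def
    by (auto simp: fa_add_def fa_diff_def)
  have "fa_diff (Dop e (word (x#u))) g' \<in> I"
    unfolding eq using g(3) rel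
    by (intro theta_ideal.add theta_ideal.lmult theta_ideal.rmult) (auto simp: X_def W_def fin_letter fin_word)
  moreover have XG: "fa_mult X g = (\<lambda>w. case w of [] \<Rightarrow> 0 | y#w' \<Rightarrow> if y = x then g w' else 0)"
    unfolding X_def mult_letter_left ..
  have supp: "{w. g' w \<noteq> 0} \<subseteq> Cons x ` {w. g w \<noteq> 0} \<union> {u}"
  proof
    fix w assume "w \<in> {w. g' w \<noteq> 0}"
    then have "(case w of [] \<Rightarrow> 0 | y#w' \<Rightarrow> if y = x then g w' else 0) + c * (if w = u then 1 else 0) \<noteq> 0"
      by (simp add: g'_def fa_add_def fa_smul_def XG W_def word_def)
    then show "w \<in> Cons x ` {w. g w \<noteq> 0} \<union> {u}" by (cases w) (auto split: if_splits)
  qed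
  have "fa_fin g'" unfolding fa_fin_def
    by (rule finite_subset[OF supp]) (use g(1) in \<open>auto simp: fa_fin_def\<close>)
  moreover have "\<forall>w. g' w \<noteq> 0 \<longrightarrow> length w < length (x#u)"
    using supp g(2) by fastforce
  ultimately show ?case by blast
qed


lemma P_fin:
  fixes e :: 'v
  assumes "finite S"
  shows "\<forall>f::'v list \<Rightarrow> 'k. {u. f u \<noteq> 0} = S \<longrightarrow> (\<forall>u\<in>S. length u \<le> n) \<longrightarrow>
     (\<exists>g. fa_fin g \<and> (\<forall>w. g w \<noteq> 0 \<longrightarrow> length w < n) \<and> fa_diff (Dop e f) g \<in> I)"
  using assms
proof (induction S rule: finite_induct)
  case empty
  show ?case
  proof (intro allI impI)
    fix f :: "'v list \<Rightarrow> 'k" assume "{u. f u \<noteq> 0} = {}"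
    then have f: "f = fa_zero" by (auto simp: fa_zero_def)
    have "fa_diff (Dop e f) fa_zero = fa_zero" unfolding f D_zero by (auto simp: fa_diff_def fa_zero_def)
    moreover have "fa_fin (fa_zero :: 'v list \<Rightarrow> 'k)" by (simp add: fa_fin_def fa_zero_def)
    ultimately show "\<exists>g. fa_fin g \<and> (\<forall>w. g w \<noteq> 0 \<longrightarrow> length w < n) \<and> fa_diff (Dop e f) g \<in> I"
      using theta_ideal.zero[of sc \<Theta> lam] by (intro exI[of _ fa_zero]) (auto simp: fa_zero_def)
  qed
next
  case (insert u S)
  show ?case
  proof (intro allI impI)
    fix f :: "'v list \<Rightarrow> 'k" assume supp: "{u. f u \<noteq> 0} = insert u S" and len: "\<forall>u\<in>insert u S. length u \<le> n"
    define f' where "f' = f(u := 0)"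
    have "{u. f' u \<noteq> 0} = S" using supp insert(2) unfolding f'_def by auto
    with insert(3) len obtain g1 where g1: "fa_fin g1" "\<forall>w. g1 w \<noteq> 0 \<longrightarrow> length w < n"
      "fa_diff (Dop e f') g1 \<in> I" by auto
    obtain g2 where g2: "fa_fin g2" "\<forall>w. g2 w \<noteq> 0 \<longrightarrow> length w < length u"
      "fa_diff (Dop e (word u)) g2 \<in> I" using word_step[of u e] by blast
    define g where "g = fa_add g1 (fa_smul (f u) g2)"
    have feq: "f = fa_add f' (fa_smul (f u) (word u))"
      by (auto simp: f'_def fa_add_def fa_smul_def word_def)
    have "fa_diff (Dop e f) g = fa_add (fa_diff (Dop e f') g1) (fa_smul (f u) (fa_diff (Dop e (word u)) g2))"
      apply (subst feq) unfolding D_add D_smul g_def by (auto simp: fa_add_def fa_diff_def fa_smul_def algebra_simps)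
    then have "fa_diff (Dop e f) g \<in> I" using g1(3) g2(3) by (auto intro: theta_ideal.add theta_ideal.smul)
    moreover have "{w. g w \<noteq> 0} \<subseteq> {w. g1 w \<noteq> 0} \<union> {w. g2 w \<noteq> 0}"
      by (auto simp: g_def fa_add_def fa_smul_def)
    then have "fa_fin g" using g1(1) g2(1) unfolding fa_fin_def by (meson finite_UnI finite_subset)
    moreover have "\<forall>w. g w \<noteq> 0 \<longrightarrow> length w < n"
    proof (intro allI impI)
      fix w assume "g w \<noteq> 0"
      then have "g1 w \<noteq> 0 \<or> g2 w \<noteq> 0" by (auto simp: g_def fa_add_def fa_smul_def)
      moreover have "length u \<le> n" using len by simp
      ultimately show "length w < n" using g1(2) g2(2) by force
    qed
    ultimately show "\<exists>g. fa_fin g \<and> (\<forall>w. g w \<noteq> 0 \<longrightarrow> length w < n) \<and> fa_diff (Dop e f) g \<in> I"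
      by blast
  qed
qed

lemma Q_nil:
  fixes e :: 'v
  shows "\<forall>f::'v list \<Rightarrow> 'k. fa_fin f \<longrightarrow> (\<forall>w. f w \<noteq> 0 \<longrightarrow> length w < n) \<longrightarrow> (Dop e ^^ n) f \<in> I"
proof (induction n)
  case 0
  show ?case
  proof (intro allI impI)
    fix f :: "'v list \<Rightarrow> 'k" assume "\<forall>w. f w \<noteq> 0 \<longrightarrow> length w < 0"
    then have "f = fa_zero" by (auto simp: fa_zero_def)
    then show "(Dop e ^^ 0) f \<in> I" by (simp add: theta_ideal.zero)
  qed
next
  case (Suc n)
  show ?case
  proof (intro allI impI)
    fix f :: "'v list \<Rightarrow> 'k" assume fin: "fa_fin f" and len: "\<forall>w. f w \<noteq> 0 \<longrightarrow> length w < Suc n"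
    obtain g where g: "fa_fin g" "\<forall>w. g w \<noteq> 0 \<longrightarrow> length w < n" "fa_diff (Dop e f) g \<in> I"
      using P_fin[where S="{u. f u \<noteq> 0}" and e=e and n=n] fin len unfolding fa_fin_def by fastforce
    have "(Dop e ^^ Suc n) f = (Dop e ^^ n) (Dop e f)" by (simp add: funpow_Suc_right del: funpow.simps)
    also have "Dop e f = fa_add (fa_diff (Dop e f) g) g" by (auto simp: fa_add_def fa_diff_def)
    finally have eq: "(Dop e ^^ Suc n) f = fa_add ((Dop e ^^ n) (fa_diff (Dop e f) g)) ((Dop e ^^ n) g)"
      by (simp add: Dn_add)
    have "(Dop e ^^ n) g \<in> I" using Suc g by blast
    then show "(Dop e ^^ Suc n) f \<in> I" unfolding eq
      by (rule theta_ideal.add[OF Dn_I[OF g(3)]])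
  qed
qed

end
theorem mainTheorem12:
  fixes sc :: "'k::field \<Rightarrow> 'v::ab_group_add \<Rightarrow> 'v"
    and mult :: "'v \<Rightarrow> 'v \<Rightarrow> 'v"
    and e :: 'v
    and \<Theta> :: "'v \<Rightarrow> 'v \<Rightarrow> 'k"
    and lam :: 'k
    and B :: "'v \<Rightarrow> 'v \<Rightarrow> ('v list \<Rightarrow> 'k)"
  assumes char: "(2::'k) \<noteq> 0"
    and lam: "lam \<noteq> 0"
    and vs: "vector_space sc"
    and mult_add: "\<And>a b c. mult (a + b) c = mult a c + mult b c"
    and mult_smul: "\<And>r a c. mult (sc r a) c = sc r (mult a c)"
    and mult_comm: "\<And>a b. mult a b = mult b a"
    and mult_assoc: "\<And>a b c. mult (mult a b) c = mult a (mult b c)"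
    and unit: "\<And>a. mult e a = a"
    and Theta_add: "\<And>a b c. \<Theta> (a + b) c = \<Theta> a c + \<Theta> b c"
    and Theta_smul: "\<And>r a c. \<Theta> (sc r a) c = r * \<Theta> a c"
    and Theta_antisym: "\<And>a b. \<Theta> a b = - \<Theta> b a"
    and B_fin: "\<And>v w. fa_fin (B v w)"
    and B_add1: "\<And>a b c. theta_eq sc \<Theta> lam (B (a + b) c) (fa_add (B a c) (B b c))"
    and B_smul1: "\<And>r a c. theta_eq sc \<Theta> lam (B (sc r a) c) (fa_smul r (B a c))"
    and B_add2: "\<And>a b c. theta_eq sc \<Theta> lam (B c (a + b)) (fa_add (B c a) (B c b))"
    and B_smul2: "\<And>r a c. theta_eq sc \<Theta> lam (B c (sc r a)) (fa_smul r (B c a))"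
    and B_eq: "\<And>v w z. theta_eq sc \<Theta> lam
                 (fa_add (B (mult v w) z) (B v (mult w z)))
                 (fa_smul (inverse lam) (fa_comm (B v z) (fa_letter w)))"
  shows "\<forall>v w. theta_eq sc \<Theta> lam (B v w) fa_zero"
proof (intro allI)
  fix v z
  let ?I = "theta_ideal sc \<Theta> lam"
  define b where "b = B v z"
  have mve: "mult v e = v" using mult_comm unit by metis
  have "fa_diff (fa_add b b) (fa_smul (inverse lam) (Dop e b)) \<in> ?I"
    using B_eq[of v e z] unfolding theta_eq_def mve unit Dop_def b_def .
  then have "fa_smul (inverse 2) (fa_diff (fa_add b b) (fa_smul (inverse lam) (Dop e b))) \<in> ?I"
    by (rule theta_ideal.smul)
  moreover define c where "c = inverse 2 * inverse lam"
  moreover have "fa_smul (inverse 2) (fa_diff (fa_add b b) (fa_smul (inverse lam) (Dop e b)))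
      = fa_diff b (fa_smul c (Dop e b))"
    using char by (auto simp: fa_smul_def fa_diff_def fa_add_def c_def field_simps)
  ultimately have base: "fa_diff b (fa_smul c (Dop e b)) \<in> ?I" by simp
  have iter: "fa_diff b (fa_smul (c^m) ((Dop e ^^ m) b)) \<in> ?I" for m
  proof (induction m)
    case 0
    have "fa_diff b (fa_smul (c^0) ((Dop e ^^ 0) b)) = fa_zero"
      by (auto simp: fa_diff_def fa_smul_def fa_zero_def)
    then show ?case by (simp add: theta_ideal.zero)
  next
    case (Suc m)
    have s: "(Dop e ^^ Suc m) b = (Dop e ^^ m) (Dop e b)" by (simp add: funpow_Suc_right del: funpow.simps)
    have "fa_diff b (fa_smul (c^Suc m) ((Dop e ^^ Suc m) b)) =
       fa_add (fa_diff b (fa_smul (c^m) ((Dop e ^^ m) b)))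
              (fa_smul (c^m) ((Dop e ^^ m) (fa_diff b (fa_smul c (Dop e b)))))"
      unfolding s Dn_diff Dn_smul by (auto simp: fa_diff_def fa_smul_def fa_add_def algebra_simps)
    then show ?case using Suc base
      by (auto intro!: theta_ideal.add theta_ideal.smul Dn_I)
  qed
  have finb: "finite {w. b w \<noteq> 0}" using B_fin unfolding b_def fa_fin_def by blast
  define N where "N = Suc (Max (length ` {w. b w \<noteq> 0}))"
  have lenN: "\<forall>w. b w \<noteq> 0 \<longrightarrow> length w < N"
    using finb unfolding N_def by (auto intro!: le_imp_less_Suc Max_ge)
  have DN: "(Dop e ^^ N) b \<in> ?I"
    using Q_nil[where e=e and n=N and sc=sc and \<Theta>=\<Theta> and lam=lam] lenN B_fin unfolding b_def by blast
  have "fa_diff b fa_zero = fa_add (fa_diff b (fa_smul (c^N) ((Dop e ^^ N) b))) (fa_smul (c^N) ((Dop e ^^ N) b))"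
    by (auto simp: fa_diff_def fa_smul_def fa_add_def fa_zero_def)
  then have "fa_diff b fa_zero \<in> ?I" using iter[of N] DN
    by (auto intro!: theta_ideal.add theta_ideal.smul)
  then show "theta_eq sc \<Theta> lam (B v z) fa_zero" unfolding theta_eq_def b_def .
qed

end
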